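(* Suppose $a\in C^2(\mathbb{R})$. Let $\tilde\alpha=(\tilde\alpha_1,\tilde\alpha_2)\in\mathbb{R}^2$ be such that $a'(\tilde\alpha_2)>0$. Given $s_0,t_0>0$ sufficiently small depending on the function $a$ and $\tilde\alpha_2$, there exists $0<\epsilon_0<1$ depending on the function $a$, $\tilde\alpha_2$, $s_0$ and $t_0$ such that, for all $\epsilon\leq \epsilon_0$, there exists a collection of weights $\{[\gamma^{\epsilon}]_j\}_{j=0}^4 \subset \mathbb{R}_{+}$ with $\sum_{j=1}^{4}[\gamma^{\epsilon}]_j=\epsilon$ and $[\gamma^{\epsilon}]_0=1-\epsilon$ such that \begin{equation*} \mu^{\epsilon}:=\sum_{j=0}^{4} [\gamma^{\epsilon}]_j\delta_{\zeta_j} \in \mathcal{M}^{pc}(\mathcal{K}^{\tilde\alpha}_1). \end{equation*}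
   Context: Let $a:\mathbb{R}\to\mathbb{R}$ and let $F(\xi)=\int_0^\xi a(s)\,ds$. For $\alpha\in\mathbb{R}^2$ define $$P_1^{\alpha}(u,v):=\begin{pmatrix} u-\alpha_1 & v-\alpha_2 \\ a(v)-a(\alpha_2) & u-\alpha_1\\ (u-\alpha_1)(a(v)-a(\alpha_2)) & \frac{(u-\alpha_1)^2}{2}+F(v)-F(\alpha_2)-a(\alpha_2)(v-\alpha_2) \end{pmatrix}$$ and $\mathcal{K}^{\alpha}_1:=\{P_1^{\alpha}(u,v):u,v\in\mathbb{R}\}\subset M^{3\times 2}$. For a set $\mathcal{K}$ of matrices, $\mathcal{M}^{pc}(\mathcal{K})$ denotes the set of probability measures $\mu$ supported on $\mathcal{K}$ such that $\int M(X)\,d\mu(X)=M\left(\int X\,d\mu(X)\right)$ for every minor $M$ (Null Lagrangian measures). Given $s_0,t_0>0$, set $\zeta_0:=P_1^{\tilde\alpha}(\tilde\alpha_1,\tilde\alpha_2)=0$, $\zeta_1:=P_1^{\tilde\alpha}(\tilde\alpha_1+s_0,\tilde\alpha_2)$, $\zeta_2:=P_1^{\tilde\alpha}(\tilde\alpha_1-s_0,\tilde\alpha_2)$, $\zeta_3:=P_1^{\tilde\alpha}(\tilde\alpha_1,\tilde\alpha_2+t_0)$, $\zeta_4:=P_1^{\tilde\alpha}(\tilde\alpha_1,\tilde\alpha_2-t_0)$. *)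

theory Defs
  imports "HOL-Analysis.Analysis"
begin

text \<open>3x2 real matrices: 3 rows, 2 columns. Entry (i,k) is X $ i $ k.\<close>
type_synonym mat32 = "real^2^3"

definition Fint :: "(real \<Rightarrow> real) \<Rightarrow> real \<Rightarrow> real" where
  "Fint a xi = (if 0 \<le> xi then integral {0..xi} a else - integral {xi..0} a)"

definition P1 :: "(real \<Rightarrow> real) \<Rightarrow> real \<times> real \<Rightarrow> real \<Rightarrow> real \<Rightarrow> mat32" where
  "P1 a \<alpha> u v = (let \<alpha>1 = fst \<alpha>; \<alpha>2 = snd \<alpha> in
     vector [ vector [u - \<alpha>1, v - \<alpha>2],
              vector [a v - a \<alpha>2, u - \<alpha>1],
              vector [(u - \<alpha>1) * (a v - a \<alpha>2),
                      (u - \<alpha>1)^2 / 2 + Fint a v - Fint a \<alpha>2 - a \<alpha>2 * (v - \<alpha>2)] ])"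

definition K1 :: "(real \<Rightarrow> real) \<Rightarrow> real \<times> real \<Rightarrow> mat32 set" where
  "K1 a \<alpha> = {P1 a \<alpha> u v | u v. True}"

text \<open>All minors of a 3x2 matrix: the entries (1x1 minors) and the 2x2 minors
  (rows i,j, columns k,l; taking i<>j, k<>l covers all of them up to sign).\<close>
definition minors32 :: "(mat32 \<Rightarrow> real) set" where
  "minors32 = {(\<lambda>X. X $ i $ k) | i k. True}
     \<union> {(\<lambda>X. X $ i $ k * X $ j $ l - X $ i $ l * X $ j $ k) | i j k l. i \<noteq> j \<and> k \<noteq> l}"

text \<open>The discrete probability measure sum_{j<n} w_j delta_{z_j} belongs to M^pc(K):
  it is a probability measure supported on K, and for every minor M,
  int M d mu = M(int X d mu).\<close>
definition Mpc_discrete :: "mat32 set \<Rightarrow> (nat \<Rightarrow> real) \<Rightarrow> (nat \<Rightarrow> mat32) \<Rightarrow> nat \<Rightarrow> bool" where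
  "Mpc_discrete K w z n \<longleftrightarrow>
     (\<forall>j<n. 0 \<le> w j) \<and> (\<Sum>j<n. w j) = 1 \<and> (\<forall>j<n. 0 < w j \<longrightarrow> z j \<in> K) \<and>
     (\<forall>M\<in>minors32. (\<Sum>j<n. w j * M (z j)) = M (\<Sum>j<n. w j *\<^sub>R z j))"

definition zeta :: "(real \<Rightarrow> real) \<Rightarrow> real \<times> real \<Rightarrow> real \<Rightarrow> real \<Rightarrow> nat \<Rightarrow> mat32" where
  "zeta a \<alpha> s0 t0 j =
     (if j = 1 then P1 a \<alpha> (fst \<alpha> + s0) (snd \<alpha>)
      else if j = 2 then P1 a \<alpha> (fst \<alpha> - s0) (snd \<alpha>)
      else if j = 3 then P1 a \<alpha> (fst \<alpha>) (snd \<alpha> + t0)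
      else if j = 4 then P1 a \<alpha> (fst \<alpha>) (snd \<alpha> - t0)
      else P1 a \<alpha> (fst \<alpha>) (snd \<alpha>))"

end

theory Submission
  imports Defs
begin


lemma mpc_core:
  fixes s t Bp Bm Gp Gm p q3 q4 e :: real and z :: "nat \<Rightarrow> mat32" and w :: "nat \<Rightarrow> real"
  assumes z0: "z 0 = vector[vector[0, 0], vector[0, 0], vector[0, 0] ]"
  and z1: "z 1 = vector[vector[s, 0], vector[0, s], vector[0, s^2/2] ]"
  and z2: "z 2 = vector[vector[-s, 0], vector[0, -s], vector[0, s^2/2] ]"
  and z3: "z 3 = vector[vector[0, t], vector[Bp, 0], vector[0, Gp] ]"
  and z4: "z 4 = vector[vector[0, -t], vector[-Bm, 0], vector[0, Gm] ]"
  and zK: "\<forall>j<5. z j \<in> K"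
  and w: "w 0 = 1 - e" "w 1 = p" "w 2 = p" "w 3 = q3" "w 4 = q4"
  and pos: "\<forall>j<5. 0 < w j" and esum: "2 * p + q3 + q4 = e"
  and E1: "2 * p * s^2 - t * q3 * Bp - t * q4 * Bm = -t * (q3-q4) * (q3 * Bp - q4 * Bm)"
  and E2: "q3 * Bp * Gp - q4 * Bm * Gm = (q3 * Bp - q4 * Bm) * (p * s^2 + q3 * Gp + q4 * Gm)"
  shows "Mpc_discrete K w z 5"
proof -
  have S5: "\<And>f::nat\<Rightarrow>real. (\<Sum>j<5. f j) = f 0 + f 1 + f 2 + f 3 + f 4"
    by (simp add: numeral_eq_Suc)
  have comp: "(\<Sum>j<5. w j *\<^sub>R z j) $ i $ k = (\<Sum>j<5. w j * z j $ i $ k)" for i k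
    by simp
  show ?thesis unfolding Mpc_discrete_def
  proof (intro conjI ballI)
    show "\<forall>j<5. 0 \<le> w j" using pos by auto
    show "(\<Sum>j<5. w j) = 1" unfolding S5 w using esum by simp
    show "\<forall>j<5. 0 < w j \<longrightarrow> z j \<in> K" using zK by auto
    fix M assume "M \<in> minors32"
    then consider (a) i k where "M = (\<lambda>X. X $ i $ k)"
      | (b) i j k l where "M = (\<lambda>X. X $ i $ k * X $ j $ l - X $ i $ l * X $ j $ k)" "i \<noteq> j" "k \<noteq> l"
      unfolding minors32_def by blast
    then show "(\<Sum>j<5. w j * M (z j)) = M (\<Sum>j<5. w j *\<^sub>R z j)"
    proof cases
      case a then show ?thesis by simp
    next
      case b
      have e12: "(\<Sum>j<5. w j * (z j $ 1 $ 1 * z j $ 2 $ 2 - z j $ 1 $ 2 * z j $ 2 $ 1)) =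
          (\<Sum>j<5. w j * z j $ 1 $ 1) * (\<Sum>j<5. w j * z j $ 2 $ 2) - (\<Sum>j<5. w j * z j $ 1 $ 2) * (\<Sum>j<5. w j * z j $ 2 $ 1)"
        unfolding S5 z0 z1 z2 z3 z4 w using E1 by (simp add: algebra_simps power2_eq_square)
      have e13: "(\<Sum>j<5. w j * (z j $ 1 $ 1 * z j $ 3 $ 2 - z j $ 1 $ 2 * z j $ 3 $ 1)) =
          (\<Sum>j<5. w j * z j $ 1 $ 1) * (\<Sum>j<5. w j * z j $ 3 $ 2) - (\<Sum>j<5. w j * z j $ 1 $ 2) * (\<Sum>j<5. w j * z j $ 3 $ 1)"
        unfolding S5 z0 z1 z2 z3 z4 w by (simp add: algebra_simps power2_eq_square)
      have e23: "(\<Sum>j<5. w j * (z j $ 2 $ 1 * z j $ 3 $ 2 - z j $ 2 $ 2 * z j $ 3 $ 1)) =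
          (\<Sum>j<5. w j * z j $ 2 $ 1) * (\<Sum>j<5. w j * z j $ 3 $ 2) - (\<Sum>j<5. w j * z j $ 2 $ 2) * (\<Sum>j<5. w j * z j $ 3 $ 1)"
        unfolding S5 z0 z1 z2 z3 z4 w using E2 by (simp add: algebra_simps power2_eq_square)
      have sw: "\<And>f g h::nat\<Rightarrow>real. (\<Sum>j<5. w j * (f j - g j)) = - (\<Sum>j<5. w j * (g j - f j))"
        by (simp add: sum_negf[symmetric] algebra_simps)
      from b(2,3) exhaust_3[of i] exhaust_3[of j] exhaust_2[of k] exhaust_2[of l] show ?thesis
        unfolding b(1) comp
        apply (elim disjE)
        apply (simp_all only: S5 z0 z1 z2 z3 z4 w)
        using E1 E2 apply (simp_all add: algebra_simps power2_eq_square)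
        done
    qed
  qed
qed


lemma weights_exist:
  fixes s t Bp Bm Gp Gm :: real
  assumes s: "s > 0" and t: "t > 0" and Bp: "Bp > 0" and Bm: "Bm > 0" and Gp: "Gp > 0" and Gm: "Gm > 0"
  shows "\<exists>e0. 0 < e0 \<and> e0 < 1 \<and> (\<forall>e. 0 < e \<and> e \<le> e0 \<longrightarrow>
     (\<exists>p q3 q4. 0 < p \<and> 0 < q3 \<and> 0 < q4 \<and> 2 * p + q3 + q4 = e \<and>
        2 * p * s^2 - t * q3 * Bp - t * q4 * Bm = -t * (q3-q4) * (q3 * Bp - q4 * Bm) \<and>
        q3 * Bp * Gp - q4 * Bm * Gm = (q3 * Bp - q4 * Bm) * (p * s^2 + q3 * Gp + q4 * Gm)))"
proof -
  define r3 where "r3 = (\<lambda>m::real. Bm * (Gm - m))"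
  define r4 where "r4 = (\<lambda>m::real. Bp * (Gp - m))"
  define Lc where "Lc = (\<lambda>m. t * (r3 m * Bp + r4 m * Bm) / 2 + r3 m * Gp + r4 m * Gm)"
  define Qc where "Qc = (\<lambda>m. t * (r3 m - r4 m) * (r3 m * Bp - r4 m * Bm) / 2)"
  define kap where "kap = (\<lambda>m. 2 * m / (Lc m + sqrt ((Lc m)^2 - 4 * Qc m * m)))"
  define Q3 where "Q3 = (\<lambda>m. kap m * r3 m)"
  define Q4 where "Q4 = (\<lambda>m. kap m * r4 m)"
  define Pp where "Pp = (\<lambda>m. (t * (Q3 m * Bp + Q4 m * Bm) - t * (Q3 m - Q4 m) * (Q3 m * Bp - Q4 m * Bm)) / (2 * s^2))"
  define Ef where "Ef = (\<lambda>m. 2 * Pp m + Q3 m + Q4 m)"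
  define Pc where "Pc = (\<lambda>m. t * (r3 m * Bp + r4 m * Bm) - t * kap m * (r3 m - r4 m) * (r3 m * Bp - r4 m * Bm))"
  define f where "f = (\<lambda>m. min (Lc m) (min ((Lc m)^2 - 4 * Qc m * m) (min (Gp - m) (min (Gm - m) (Pc m)))))"
  have L0: "Lc 0 > 0" unfolding Lc_def r3_def r4_def using s t Bp Bm Gp Gm
    by (intro add_pos_pos mult_pos_pos divide_pos_pos) auto
  have kap0: "kap 0 = 0" unfolding kap_def by simp
  have den: "Lc m + sqrt ((Lc m)^2 - 4 * Qc m * m) \<noteq> 0" if "Lc m > 0" "(Lc m)^2 - 4 * Qc m * m \<ge> 0" for m
    using that real_sqrt_ge_zero[OF that(2)] by linarith
  have contk: "isCont kap m" if "Lc m > 0" "(Lc m)^2 - 4 * Qc m * m \<ge> 0" for m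
    unfolding kap_def using den[OF that] unfolding Lc_def Qc_def r3_def r4_def
    by (intro continuous_intros) auto
  have contf0: "isCont f 0"
    using contk[OF L0] L0 unfolding f_def Pc_def
    unfolding Lc_def Qc_def r3_def r4_def
    by (intro continuous_intros) auto
  have f0: "f 0 > 0"
    using L0 Gp Gm kap0 unfolding f_def Pc_def r3_def r4_def using t Bp Bm
    by (auto intro!: add_pos_pos mult_pos_pos)
  have "\<forall>\<^sub>F m in at 0. f m > 0"
    using contf0 f0 unfolding isCont_def by (rule order_tendstoD(1))
  then obtain d where d: "d > 0" "\<And>m. m \<noteq> 0 \<Longrightarrow> dist m 0 < d \<Longrightarrow> f m > 0"
    unfolding eventually_at by auto
  define m0 where "m0 = d / 2"
  have fpos: "f m > 0" if "0 \<le> m" "m \<le> m0" for m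
    using d f0 that unfolding m0_def by (cases "m = 0") auto
  have good: "Lc m > 0" "(Lc m)^2 - 4 * Qc m * m > 0" "Gp - m > 0" "Gm - m > 0" "Pc m > 0"
    if "0 \<le> m" "m \<le> m0" for m
    using fpos[OF that] unfolding f_def by auto
  have contE: "continuous_on {0..m0} Ef"
  proof (intro continuous_at_imp_continuous_on ballI)
    fix m assume "m \<in> {0..m0}"
    then have "0 \<le> m" "m \<le> m0" by auto
    then have "isCont kap m" using good[of m] by (intro contk) auto
    then have c3: "isCont Q3 m" and c4: "isCont Q4 m" unfolding Q3_def Q4_def r3_def r4_def
      by (auto intro!: continuous_intros)
    have cp: "isCont Pp m" unfolding Pp_def using c3 c4 s
      by (intro continuous_intros) auto
    show "isCont Ef m" unfolding Ef_def using c3 c4 cp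
      by (intro continuous_intros) auto
  qed
  have sol: "0 < Pp m \<and> 0 < Q3 m \<and> 0 < Q4 m \<and> 2 * Pp m + Q3 m + Q4 m = Ef m \<and>
        2 * Pp m * s^2 - t * Q3 m * Bp - t * Q4 m * Bm = -t * (Q3 m - Q4 m) * (Q3 m * Bp - Q4 m * Bm) \<and>
        Q3 m * Bp * Gp - Q4 m * Bm * Gm = (Q3 m * Bp - Q4 m * Bm) * (Pp m * s^2 + Q3 m * Gp + Q4 m * Gm)"
    if "0 < m" "m \<le> m0" for m
  proof -
    note g = good[of m] 
    have gg: "Lc m > 0" "(Lc m)^2 - 4 * Qc m * m > 0" "Gp - m > 0" "Gm - m > 0" "Pc m > 0"
      using g that by auto
    define D where "D = sqrt ((Lc m)^2 - 4 * Qc m * m)"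
    have D0: "D \<ge> 0" unfolding D_def using gg(2) by (intro real_sqrt_ge_zero) linarith
    have D2: "D^2 = (Lc m)^2 - 4 * Qc m * m" unfolding D_def using less_imp_le[OF gg(2)] by simp
    have kd: "kap m = 2 * m / (Lc m + D)" unfolding kap_def D_def by simp
    have kpos: "kap m > 0" unfolding kd using that gg D0 by simp
    have quad: "Qc m * (kap m)^2 - Lc m * kap m + m = 0"
    proof -
      have ne: "Lc m + D > 0" using gg D0 by simp
      have hk: "kap m * (Lc m + D) = 2 * m" unfolding kd using ne by simp
      have "(Qc m * (kap m)^2 - Lc m * kap m + m) * (Lc m + D)^2
           = Qc m * (kap m * (Lc m + D))^2 - Lc m * (Lc m + D) * (kap m * (Lc m + D)) + m * (Lc m + D)^2"
        by (simp add: algebra_simps power2_eq_square)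
      also have "\<dots> = m * (4 * Qc m * m - (Lc m)^2 + D^2)"
        unfolding hk by (simp add: algebra_simps power2_eq_square)
      also have "\<dots> = 0" using D2 by simp
      finally show ?thesis using ne by simp
    qed
    have q3: "Q3 m > 0" unfolding Q3_def r3_def using kpos Bm gg by simp
    have q4: "Q4 m > 0" unfolding Q4_def r4_def using kpos Bp gg by simp
    define N where "N = t * (Q3 m * Bp + Q4 m * Bm) - t * (Q3 m - Q4 m) * (Q3 m * Bp - Q4 m * Bm)"
    have s2: "s^2 > 0" using s by simp
    have PpN: "Pp m = N / (2 * s^2)" unfolding Pp_def N_def by simp
    have Nk: "N = kap m * Pc m"
      unfolding N_def Pc_def Q3_def Q4_def by (simp add: algebra_simps)
    have pp: "Pp m > 0" unfolding PpN Nk using kpos gg s2 by simp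
    have PpN2: "2 * Pp m * s^2 = N" unfolding PpN using s2 by simp
    have E1: "2 * Pp m * s^2 - t * Q3 m * Bp - t * Q4 m * Bm = -t * (Q3 m - Q4 m) * (Q3 m * Bp - Q4 m * Bm)"
      unfolding PpN2 N_def by (simp add: algebra_simps)
    have H: "Pp m * s^2 + Q3 m * Gp + Q4 m * Gm = m"
    proof -
      have "Pp m * s^2 = N / 2" using PpN2 by simp
      moreover have "N / 2 + Q3 m * Gp + Q4 m * Gm = kap m * Lc m - (kap m)^2 * Qc m"
        unfolding N_def Q3_def Q4_def Lc_def Qc_def
        by (simp add: field_simps power2_eq_square)
      ultimately show ?thesis using quad by (simp add: algebra_simps)
    qed
    have E2: "Q3 m * Bp * Gp - Q4 m * Bm * Gm = (Q3 m * Bp - Q4 m * Bm) * (Pp m * s^2 + Q3 m * Gp + Q4 m * Gm)"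
      unfolding H unfolding Q3_def Q4_def r3_def r4_def by (simp add: algebra_simps)
    show ?thesis using E1 E2 pp q3 q4 unfolding Ef_def by simp
  qed
  have m0: "m0 > 0" unfolding m0_def using d by simp
  have Em0: "Ef m0 > 0" using sol[OF m0] unfolding Ef_def by simp
  have Ef0: "Ef 0 = 0" unfolding Ef_def Pp_def Q3_def Q4_def kap0 by simp
  have main: "\<exists>p q3 q4. 0 < p \<and> 0 < q3 \<and> 0 < q4 \<and> 2 * p + q3 + q4 = e \<and>
        2 * p * s^2 - t * q3 * Bp - t * q4 * Bm = -t * (q3-q4) * (q3 * Bp - q4 * Bm) \<and>
        q3 * Bp * Gp - q4 * Bm * Gm = (q3 * Bp - q4 * Bm) * (p * s^2 + q3 * Gp + q4 * Gm)"
    if e: "0 < e" "e \<le> Ef m0" for e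
  proof -
    obtain m where m: "0 \<le> m" "m \<le> m0" "Ef m = e"
      using IVT'[of Ef 0 e m0] Ef0 contE m0 e by auto
    have "m \<noteq> 0" using m e Ef0 by auto
    then have "0 < m" using m by simp
    from sol[OF this m(2)] m(3) show ?thesis by blast
  qed
  show ?thesis
    apply (rule exI[of _ "min (Ef m0) (1/2)"])
    using Em0 main by auto
qed


lemma Fint_deriv:
  assumes ca: "continuous_on UNIV a"
  shows "(Fint a has_real_derivative a x) (at x)"
proof -
  define c where "c = min 0 x - 1"
  have int: "a integrable_on {u..v}" for u v
    using ca by (intro integrable_continuous_real) (auto intro: continuous_on_subset)
  have eq: "integral {c..y} a - integral {c..0} a = Fint a y" if "y \<in> {c<..}" for y
  proof (cases "0 \<le> y")
    case True
    have "c \<le> 0" unfolding c_def by simp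
    then have "integral {c..0} a + integral {0..y} a = integral {c..y} a"
      using True int by (intro Henstock_Kurzweil_Integration.integral_combine) auto
    then show ?thesis using True unfolding Fint_def by simp
  next
    case False
    have "c \<le> y" using that by simp
    then have "integral {c..y} a + integral {y..0} a = integral {c..0} a"
      using False int by (intro Henstock_Kurzweil_Integration.integral_combine) auto
    then show ?thesis using False unfolding Fint_def by simp
  qed
  have cx: "c < x" "x < x + 1" unfolding c_def by auto
  have "((\<lambda>y. integral {c..y} a) has_real_derivative a x) (at x within {c..x+1})"
    using ca cx by (intro integral_has_real_derivative) (auto intro: continuous_on_subset)
  then have "((\<lambda>y. integral {c..y} a) has_real_derivative a x) (at x)"
    using at_within_Icc_at[OF cx] by simp
  then have "((\<lambda>y. integral {c..y} a - integral {c..0} a) has_real_derivative a x) (at x)"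
    by (auto intro!: derivative_eq_intros)
  then show ?thesis
    by (rule has_field_derivative_transform_within_open[where S="{c<..}"]) (use cx eq in auto)
qed

lemma positivity:
  fixes a a' :: "real \<Rightarrow> real" and x0 :: real
  assumes d: "\<forall>x. (a has_real_derivative a' x) (at x)"
    and ca': "isCont a' x0" and pos: "a' x0 > 0"
  shows "\<exists>\<delta>>0. \<forall>t. 0 < t \<and> t < \<delta> \<longrightarrow>
     a (x0 + t) - a x0 > 0 \<and> a x0 - a (x0 - t) > 0 \<and>
     Fint a (x0 + t) - Fint a x0 - a x0 * t > 0 \<and> Fint a (x0 - t) - Fint a x0 + a x0 * t > 0"
proof -
  have "\<forall>\<^sub>F x in at x0. a' x > 0"
    using ca' pos unfolding isCont_def by (rule order_tendstoD(1))
  then obtain d where d0: "d > 0" and dd: "\<And>x. x \<noteq> x0 \<Longrightarrow> dist x x0 < d \<Longrightarrow> a' x > 0"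
    unfolding eventually_at by auto
  have ap: "a' x > 0" if "\<bar>x - x0\<bar> < d" for x
    using dd[of x] pos that by (cases "x = x0") (auto simp: dist_real_def)
  have inc: "a y - a x > 0" if xy: "x < y" "\<bar>x - x0\<bar> < d" "\<bar>y - x0\<bar> < d" for x y
  proof -
    obtain z where z: "x < z" "z < y" "a y - a x = (y - x) * a' z"
      using MVT2[OF xy(1), of a a'] d by auto
    have "a' z > 0" using z xy by (intro ap) auto
    then show ?thesis using z xy by simp
  qed
  have ca: "continuous_on UNIV a"
    using d by (intro continuous_at_imp_continuous_on) (auto intro: DERIV_isCont)
  define G where "G = (\<lambda>y. Fint a (x0 + y) - Fint a x0 - a x0 * y)"
  have dG: "DERIV G y :> a (x0 + y) - a x0" for y
    unfolding G_def
    by (auto intro!: derivative_eq_intros Fint_deriv[OF ca, THEN DERIV_chain2])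
  show ?thesis
  proof (rule exI[of _ d], intro conjI allI impI d0)
    fix t assume t: "0 < t \<and> t < d"
    show "a (x0 + t) - a x0 > 0" using t by (intro inc) auto
    show "a x0 - a (x0 - t) > 0" using t by (intro inc) auto
    obtain z where z: "0 < z" "z < t" "G t - G 0 = (t - 0) * (a (x0 + z) - a x0)"
      using MVT2[of 0 t G "\<lambda>y. a (x0 + y) - a x0"] dG t by auto
    have "a (x0 + z) - a x0 > 0" using z t by (intro inc) auto
    then have "G t > 0" using z t by (simp add: G_def)
    then show "Fint a (x0 + t) - Fint a x0 - a x0 * t > 0" by (simp add: G_def)
    obtain z where z: "-t < z" "z < 0" "G 0 - G (-t) = (0 - (-t)) * (a (x0 + z) - a x0)"
      using MVT2[of "-t" 0 G "\<lambda>y. a (x0 + y) - a x0"] dG t by auto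
    have "a x0 - a (x0 + z) > 0" using z t by (intro inc) auto
    then have "G (-t) > 0" using z t by (simp add: G_def algebra_simps)
    then show "Fint a (x0 - t) - Fint a x0 + a x0 * t > 0" by (simp add: G_def)
  qed
qed

theorem theorem8:
  fixes a a' a'' :: "real \<Rightarrow> real" and \<alpha> :: "real \<times> real"
  assumes "\<forall>x. (a has_real_derivative a' x) (at x)"
    and "\<forall>x. (a' has_real_derivative a'' x) (at x)"
    and "continuous_on UNIV a''"
    and "a' (snd \<alpha>) > 0"
  shows "\<exists>\<delta>>0. \<forall>s0 t0. 0 < s0 \<and> s0 < \<delta> \<and> 0 < t0 \<and> t0 < \<delta> \<longrightarrow>
           (\<exists>\<epsilon>0. 0 < \<epsilon>0 \<and> \<epsilon>0 < 1 \<and>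
              (\<forall>\<epsilon>. 0 < \<epsilon> \<and> \<epsilon> \<le> \<epsilon>0 \<longrightarrow>
                 (\<exists>\<gamma> :: nat \<Rightarrow> real. (\<forall>j<5. 0 < \<gamma> j) \<and> (\<Sum>j\<in>{1..4}. \<gamma> j) = \<epsilon> \<and>
                    \<gamma> 0 = 1 - \<epsilon> \<and> Mpc_discrete (K1 a \<alpha>) \<gamma> (zeta a \<alpha> s0 t0) 5)))"
proof -
  have ca': "isCont a' (snd \<alpha>)" using assms(2) DERIV_isCont by blast
  obtain d where d0: "d > 0" and dd: "\<And>t. 0 < t \<and> t < d \<Longrightarrow>
     a (snd \<alpha> + t) - a (snd \<alpha>) > 0 \<and> a (snd \<alpha>) - a (snd \<alpha> - t) > 0 \<and>
     Fint a (snd \<alpha> + t) - Fint a (snd \<alpha>) - a (snd \<alpha>) * t > 0 \<and>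
     Fint a (snd \<alpha> - t) - Fint a (snd \<alpha>) + a (snd \<alpha>) * t > 0"
    using positivity[OF assms(1) ca' assms(4)] by blast
  show ?thesis
  proof (rule exI[of _ d], intro conjI allI impI d0)
    fix s0 t0 :: real assume st: "0 < s0 \<and> s0 < d \<and> 0 < t0 \<and> t0 < d"
    define x2 where "x2 = snd \<alpha>"
    define Bp where "Bp = a (x2 + t0) - a x2"
    define Bm where "Bm = a x2 - a (x2 - t0)"
    define Gp where "Gp = Fint a (x2 + t0) - Fint a x2 - a x2 * t0"
    define Gm where "Gm = Fint a (x2 - t0) - Fint a x2 + a x2 * t0"
    have pos: "Bp > 0" "Bm > 0" "Gp > 0" "Gm > 0"
      using dd[of t0] st unfolding Bp_def Bm_def Gp_def Gm_def x2_def by auto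
    obtain e0 where e0: "0 < e0" "e0 < 1" and e0s: "\<And>e. 0 < e \<and> e \<le> e0 \<Longrightarrow>
       (\<exists>p q3 q4. 0 < p \<and> 0 < q3 \<and> 0 < q4 \<and> 2 * p + q3 + q4 = e \<and>
        2 * p * s0^2 - t0 * q3 * Bp - t0 * q4 * Bm = -t0 * (q3-q4) * (q3 * Bp - q4 * Bm) \<and>
        q3 * Bp * Gp - q4 * Bm * Gm = (q3 * Bp - q4 * Bm) * (p * s0^2 + q3 * Gp + q4 * Gm))"
      using weights_exist[of s0 t0 Bp Bm Gp Gm] st pos by blast
    define z where "z = zeta a \<alpha> s0 t0"
    have z0: "z 0 = vector[vector[0, 0], vector[0, 0], vector[0, 0] ]"
      unfolding z_def zeta_def P1_def by simp
    have z1: "z 1 = vector[vector[s0, 0], vector[0, s0], vector[0, s0^2/2] ]"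
      unfolding z_def zeta_def P1_def by simp
    have z2: "z 2 = vector[vector[-s0, 0], vector[0, -s0], vector[0, s0^2/2] ]"
      unfolding z_def zeta_def P1_def by simp
    have z3: "z 3 = vector[vector[0, t0], vector[Bp, 0], vector[0, Gp] ]"
      unfolding z_def zeta_def P1_def Bp_def Gp_def x2_def by (simp add: Let_def)
    have z4: "z 4 = vector[vector[0, -t0], vector[-Bm, 0], vector[0, Gm] ]"
      unfolding z_def zeta_def P1_def Bm_def Gm_def x2_def by (simp add: Let_def algebra_simps)
    have zK: "\<forall>j<5. z j \<in> K1 a \<alpha>"
      unfolding z_def zeta_def K1_def by auto
    show "\<exists>\<epsilon>0. 0 < \<epsilon>0 \<and> \<epsilon>0 < 1 \<and>
              (\<forall>\<epsilon>. 0 < \<epsilon> \<and> \<epsilon> \<le> \<epsilon>0 \<longrightarrow>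
                 (\<exists>\<gamma> :: nat \<Rightarrow> real. (\<forall>j<5. 0 < \<gamma> j) \<and> (\<Sum>j\<in>{1..4}. \<gamma> j) = \<epsilon> \<and>
                    \<gamma> 0 = 1 - \<epsilon> \<and> Mpc_discrete (K1 a \<alpha>) \<gamma> (zeta a \<alpha> s0 t0) 5))"
    proof (rule exI[of _ e0], intro conjI allI impI e0)
      fix e assume e: "0 < e \<and> e \<le> e0"
      obtain p q3 q4 where pq: "0 < p" "0 < q3" "0 < q4" "2 * p + q3 + q4 = e"
        and E1: "2 * p * s0^2 - t0 * q3 * Bp - t0 * q4 * Bm = -t0 * (q3-q4) * (q3 * Bp - q4 * Bm)"
        and E2: "q3 * Bp * Gp - q4 * Bm * Gm = (q3 * Bp - q4 * Bm) * (p * s0^2 + q3 * Gp + q4 * Gm)"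
        using e0s[OF e] by blast
      define w where "w = (\<lambda>j::nat. if j = 0 then 1 - e else if j = 1 then p else if j = 2 then p
                              else if j = 3 then q3 else q4)"
      have ww: "w 0 = 1 - e" "w 1 = p" "w 2 = p" "w 3 = q3" "w 4 = q4" unfolding w_def by auto
      have wpos: "\<forall>j<5. 0 < w j" unfolding w_def using pq e e0 by auto
      have wsum: "(\<Sum>j\<in>{1..4}. w j) = e"
      proof -
        have "{1..4::nat} = {1,2,3,4}" by auto
        then show ?thesis using pq(4) ww by simp
      qed
      have "Mpc_discrete (K1 a \<alpha>) w z 5"
        by (rule mpc_core[OF z0 z1 z2 z3 z4 zK ww wpos pq(4) E1 E2])
      then show "\<exists>\<gamma> :: nat \<Rightarrow> real. (\<forall>j<5. 0 < \<gamma> j) \<and> (\<Sum>j\<in>{1..4}. \<gamma> j) = e \<and>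
                    \<gamma> 0 = 1 - e \<and> Mpc_discrete (K1 a \<alpha>) \<gamma> (zeta a \<alpha> s0 t0) 5"
        using wpos wsum ww unfolding z_def by blast
    qed
  qed
qed

end
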